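(* Let $(X,d)$ be a compact pointed metric space and let $((x_n,y_n))_{n=1}^\infty$ be a Lipschitz interpolating sequence for $\mathrm{Lip}_0(X)$ in $\widetilde X$. Then $d(x_n,y_n)\to 0$ as $n\to\infty$.
   Context: All spaces are real. $(X,d)$ has a base point $0$, $\widetilde{X}=\{(x,y)\in X\times X: x\neq y\}$. $\mathrm{Lip}_0(X)$ is the Banach space of Lipschitz $f:X\to\mathbb{R}$ with $f(0)=0$, normed by the best Lipschitz constant. A sequence $((x_n,y_n))_{n=1}^\infty$ in $\widetilde X$ is Lipschitz interpolating for $\mathrm{Lip}_0(X)$ if the operator $T:\mathrm{Lip}_0(X)\to\ell_\infty$, $T(f)=\big((f(x_n)-f(y_n))/d(x_n,y_n)\big)_{n}$, is surjective. *)

theory Defs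
  imports "HOL-Analysis.Analysis"
begin

definition Lip0 :: "'a::metric_space set \<Rightarrow> 'a \<Rightarrow> ('a \<Rightarrow> real) \<Rightarrow> bool" where
  "Lip0 X p f \<longleftrightarrow> f p = 0 \<and> (\<exists>C. C-lipschitz_on X f)"

text \<open>A sequence of pairs in X-tilde is Lipschitz interpolating if the operator
  T f = ((f(x_n) - f(y_n)) / d(x_n,y_n))_n from Lip_0(X) to l_infinity is surjective,
  i.e. every bounded real sequence is attained.\<close>
definition lipschitz_interpolating ::
    "'a::metric_space set \<Rightarrow> 'a \<Rightarrow> (nat \<Rightarrow> 'a) \<Rightarrow> (nat \<Rightarrow> 'a) \<Rightarrow> bool" where
  "lipschitz_interpolating X p x y \<longleftrightarrow>
     (\<forall>n. x n \<in> X \<and> y n \<in> X \<and> x n \<noteq> y n) \<and>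
     (\<forall>c::nat \<Rightarrow> real. bounded (range c) \<longrightarrow>
        (\<exists>f. Lip0 X p f \<and> (\<forall>n. (f (x n) - f (y n)) / dist (x n) (y n) = c n)))"

end

theory Submission
  imports Defs
begin

lemma alt_not_conv: "\<not> ((\<lambda>k. (-1::real)^k) \<longlonglongrightarrow> L)"
proof
  assume h: "(\<lambda>k. (-1::real)^k) \<longlonglongrightarrow> L"
  have "(\<lambda>k. (-1::real)^Suc k) \<longlonglongrightarrow> L" using h by (rule LIMSEQ_Suc)
  moreover have "(\<lambda>k. (-1::real)^Suc k) \<longlonglongrightarrow> -L" using tendsto_minus[OF h] by simp
  ultimately have "L = -L" using LIMSEQ_unique by blast
  hence L0: "L = 0" by simp
  have "(\<lambda>k. \<bar>(-1::real)^k\<bar>) \<longlonglongrightarrow> \<bar>L\<bar>" using tendsto_rabs[OF h] .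
  hence "(\<lambda>k. 1::real) \<longlonglongrightarrow> 0" using L0 by simp
  thus False by (simp add: LIMSEQ_const_iff)
qed

theorem proposition4p1:
  fixes X :: "'a::metric_space set" and p :: 'a and x y :: "nat \<Rightarrow> 'a"
  assumes "compact X" and "p \<in> X"
    and "lipschitz_interpolating X p x y"
  shows "(\<lambda>n. dist (x n) (y n)) \<longlonglongrightarrow> 0"
proof (rule ccontr)
  assume nt: "\<not> (\<lambda>n. dist (x n) (y n)) \<longlonglongrightarrow> 0"
  have xy: "\<And>n. x n \<in> X \<and> y n \<in> X \<and> x n \<noteq> y n"
    and interp: "\<And>c::nat \<Rightarrow> real. bounded (range c) \<Longrightarrow>
        (\<exists>f. Lip0 X p f \<and> (\<forall>n. (f (x n) - f (y n)) / dist (x n) (y n) = c n))"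
    using assms(3) unfolding lipschitz_interpolating_def by auto
  obtain e where e: "e > 0" "\<exists>\<^sub>F n in sequentially. \<not> dist (dist (x n) (y n)) 0 < e"
  proof -
    from nt obtain e where "e > 0" "\<not> eventually (\<lambda>n. dist (dist (x n) (y n)) 0 < e) sequentially"
      unfolding tendsto_iff by auto
    thus ?thesis using that unfolding not_eventually by auto
  qed
  obtain r :: "nat \<Rightarrow> nat" where r: "strict_mono r" "\<And>k. \<not> dist (dist (x (r k)) (y (r k))) 0 < e"
  proof -
    have "infinite {n. \<not> dist (dist (x n) (y n)) 0 < e}"
      using e(2) unfolding cofinite_eq_sequentially[symmetric] frequently_cofinite .
    from infinite_enumerate[OF this] show ?thesis using that by auto
  qed
  have cXX: "compact (X \<times> X)" using assms(1) by (simp add: compact_Times)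
  have inXX: "\<forall>k. (\<lambda>k. (x (r k), y (r k))) k \<in> X \<times> X" using xy by auto
  obtain ab s where ab: "ab \<in> X \<times> X" "strict_mono s"
      "((\<lambda>k. (x (r k), y (r k))) \<circ> s) \<longlonglongrightarrow> ab"
    by (rule seq_compactE[OF compact_imp_seq_compact[OF cXX] inXX])
  obtain a b where abd: "ab = (a, b)" by (cases ab)
  define g where "g = r \<circ> s"
  have g: "strict_mono g" using r(1) ab(2) unfolding g_def by (simp add: strict_mono_o)
  have "((\<lambda>k. (x (g k), y (g k)))) \<longlonglongrightarrow> (a, b)" using ab(3) abd by (simp add: g_def o_def)
  hence xa: "(\<lambda>k. x (g k)) \<longlonglongrightarrow> a" and yb: "(\<lambda>k. y (g k)) \<longlonglongrightarrow> b"
    using tendsto_fst tendsto_snd by fastforce+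
  have aX: "a \<in> X" and bX: "b \<in> X" using ab(1) abd by auto
  have "(\<lambda>k. dist (x (g k)) (y (g k))) \<longlonglongrightarrow> dist a b" using tendsto_dist[OF xa yb] .
  moreover have "e \<le> dist (x (g k)) (y (g k))" for k
    using r(2)[of "s k"] unfolding g_def o_def by (simp add: not_less)
  ultimately have dab: "e \<le> dist a b" using LIMSEQ_le_const by blast
  have injg: "inj g" using g strict_mono_imp_inj_on by blast
  define c where "c n = (if n \<in> range g then (-1::real)^(inv g n) else 0)" for n
  have cg: "c (g k) = (-1)^k" for k using injg by (simp add: c_def)
  have "bounded (range c)"
    unfolding bounded_iff by (rule exI[of _ 1]) (auto simp: c_def abs_power_minus)
  then obtain f where f: "Lip0 X p f" "\<And>n. (f (x n) - f (y n)) / dist (x n) (y n) = c n"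
    using interp by blast
  obtain C where "C-lipschitz_on X f" using f(1) unfolding Lip0_def by blast
  hence cf: "continuous_on X f" by (rule lipschitz_on_continuous_on)
  have fx: "(\<lambda>k. f (x (g k))) \<longlonglongrightarrow> f a"
    using continuous_on_tendsto_compose[OF cf xa aX] xy by auto
  have fy: "(\<lambda>k. f (y (g k))) \<longlonglongrightarrow> f b"
    using continuous_on_tendsto_compose[OF cf yb bX] xy by auto
  have "(\<lambda>k. (f (x (g k)) - f (y (g k))) / dist (x (g k)) (y (g k))) \<longlonglongrightarrow> (f a - f b) / dist a b"
    using e(1) dab by (intro tendsto_intros fx fy xa yb) auto
  hence "(\<lambda>k. (-1::real)^k) \<longlonglongrightarrow> (f a - f b) / dist a b" using f(2) cg by simp
  thus False using alt_not_conv by blast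
qed

end
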